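(* Fix $0<\alpha<1$ and an integer $l\ge1$, let $\phi_\alpha(t)=t^{\alpha-1}E_{\alpha,\alpha}(-t^{\alpha})$, and let $P_{n,\alpha,l}(t)=\frac{(l)_n}{n!}t^{(n+l)\alpha-1}E^{n+l}_{\alpha,(n+l)\alpha}(-t^{\alpha})$. Define $m_{\alpha,l}(t)=\sum_{n=0}^\infty n\,P_{n,\alpha,l}(t)$ for $t>0$. Then $$m_{\alpha,l}(t)=-\frac{\partial}{\partial k}\Big[t^{\alpha l-1}E^{l}_{\alpha,\alpha l}\big(-(1-e^{-k})t^{\alpha}\big)\Big]_{k=0}=\frac{l\,t^{l\alpha+\alpha-1}}{\Gamma((l+1)\alpha)},$$ and $m_{\alpha,l}$ satisfies the renewal equation $$m_{\alpha,l}(t)=l\,(I^{\alpha l}_{0+}\phi_\alpha)(t)+(m_{\alpha,l}*\phi_\alpha)(t),\qquad t>0.$$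
   Context: $E^{\gamma}_{\alpha,\beta}(x)=\sum_{k\ge0}\frac{(\gamma)_k x^k}{\Gamma(\alpha k+\beta)\,k!}$ with Pochhammer symbol $(\gamma)_k$, $E_{\alpha,\beta}=E^1_{\alpha,\beta}$. $(I^{\beta}_{0+}f)(t)=\frac{1}{\Gamma(\beta)}\int_0^t(t-u)^{\beta-1}f(u)\,du$ for $\beta>0$. Laplace convolution $(f*g)(t)=\int_0^t f(t-u)g(u)\,du$. *)

theory Defs
  imports "HOL-Analysis.Analysis"
begin

definition ML3 :: "real \<Rightarrow> real \<Rightarrow> real \<Rightarrow> real \<Rightarrow> real" where
  "ML3 \<gamma> \<alpha> \<beta> x = (\<Sum>k. pochhammer \<gamma> k * x ^ k / (Gamma (\<alpha> * real k + \<beta>) * fact k))"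

definition ML2 :: "real \<Rightarrow> real \<Rightarrow> real \<Rightarrow> real" where
  "ML2 \<alpha> \<beta> x = ML3 1 \<alpha> \<beta> x"

definition RL_int :: "real \<Rightarrow> (real \<Rightarrow> real) \<Rightarrow> real \<Rightarrow> real" where
  "RL_int \<beta> f t = (1 / Gamma \<beta>) * integral {0..t} (\<lambda>u. (t - u) powr (\<beta> - 1) * f u)"

definition lconv :: "(real \<Rightarrow> real) \<Rightarrow> (real \<Rightarrow> real) \<Rightarrow> real \<Rightarrow> real" where
  "lconv f g t = integral {0..t} (\<lambda>u. f (t - u) * g u)"

definition phi_ML :: "real \<Rightarrow> real \<Rightarrow> real" where
  "phi_ML \<alpha> t = t powr (\<alpha> - 1) * ML2 \<alpha> \<alpha> (- (t powr \<alpha>))"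

definition P_nal :: "nat \<Rightarrow> real \<Rightarrow> nat \<Rightarrow> real \<Rightarrow> real" where
  "P_nal n \<alpha> l t = pochhammer (real l) n / fact n
      * t powr ((real n + real l) * \<alpha> - 1)
      * ML3 (real n + real l) \<alpha> ((real n + real l) * \<alpha>) (- (t powr \<alpha>))"

definition m_al :: "real \<Rightarrow> nat \<Rightarrow> real \<Rightarrow> real" where
  "m_al \<alpha> l t = (\<Sum>n. real n * P_nal n \<alpha> l t)"

end

theory Submission
  imports Defs
begin


lemma Gamma_ratio_bound:
  fixes z a :: real assumes a: "a > 0" and z: "z > 1"
  shows "Gamma z / Gamma (z + a) \<le> (z - 1) powr (-a)"
proof -
  define T where "T = 1 / (1 + a)"
  have T0: "0 \<le> T" "T \<le> 1" using a by (auto simp: T_def)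
  have e1: "T * (1 + a) = 1" using a by (simp add: T_def)
  have "(1 - T) * (z - 1) + T * (z + a) = z - 1 + T * (1 + a)" by (simp add: algebra_simps)
  also have "\<dots> = z" using e1 by simp
  finally have zeq: "(1 - T) *\<^sub>R (z - 1) + T *\<^sub>R (z + a) = z" by simp
  have "(ln \<circ> Gamma) ((1 - T) *\<^sub>R (z - 1) + T *\<^sub>R (z + a)) \<le> (1 - T) * (ln \<circ> Gamma) (z - 1) + T * (ln \<circ> Gamma) (z + a)"
    by (rule convex_onD[OF log_convex_Gamma_real T0]) (use z a in auto)
  hence 1: "ln (Gamma z) \<le> (1 - T) * ln (Gamma (z - 1)) + T * ln (Gamma (z + a))"
    using zeq by simp
  have "Gamma z = (z - 1) * Gamma (z - 1)"
    using Gamma_plus1[of "z - 1"] z nonpos_Ints_nonpos[of "z - 1"] by force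
  hence 2: "ln (Gamma z) = ln (z - 1) + ln (Gamma (z - 1))"
  proof -
    have "Gamma (z - 1) > 0" by (rule Gamma_real_pos) (use z in simp)
    hence "ln ((z - 1) * Gamma (z - 1)) = ln (z - 1) + ln (Gamma (z - 1))"
      using z by (intro ln_mult_pos) auto
    thus ?thesis using \<open>Gamma z = _\<close> by simp
  qed
  have "T * (ln (Gamma z) - ln (Gamma (z + a))) \<le> - (1 - T) * ln (z - 1)"
    using 1 2 by (simp add: algebra_simps)
  hence "(1 + a) * (T * (ln (Gamma z) - ln (Gamma (z + a)))) \<le> (1 + a) * (- (1 - T) * ln (z - 1))"
    by (rule mult_left_mono) (use a in simp)
  moreover have "(1 + a) * (T * (ln (Gamma z) - ln (Gamma (z + a)))) = ln (Gamma z) - ln (Gamma (z + a))"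
    using e1 by (simp add: mult.assoc[symmetric] mult.commute[of "1+a"])
  moreover have "(1 + a) * (- (1 - T) * ln (z - 1)) = - (1 + a) * ln (z - 1) + (T * (1 + a)) * ln (z - 1)"
    by (simp add: algebra_simps)
  moreover have "- (1 + a) * ln (z - 1) + (T * (1 + a)) * ln (z - 1) = - a * ln (z - 1)"
    unfolding e1 by (simp add: algebra_simps)
  ultimately have "ln (Gamma z) - ln (Gamma (z + a)) \<le> - a * ln (z - 1)" by simp
  hence "exp (ln (Gamma z) - ln (Gamma (z + a))) \<le> exp (- a * ln (z - 1))" by simp
  moreover have "exp (ln (Gamma z) - ln (Gamma (z + a))) = Gamma z / Gamma (z + a)"
  proof -
    have "Gamma z > 0" "Gamma (z + a) > 0" by (rule Gamma_real_pos, use z a in simp)+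
    thus ?thesis by (simp add: exp_diff)
  qed
  moreover have "exp (- a * ln (z - 1)) = (z - 1) powr (-a)"
    using z by (simp add: powr_def)
  ultimately show ?thesis by simp
qed

lemma ratio_aux:
  fixes q G G' F P A b Y :: real
  assumes "q > 0" "G > 0" "G' > 0" "F > 0"
  shows "(q + 1) * (P * A * (b * Y) / (G' * (q * F))) = q * (P * Y / (G * F)) * ((q+1)/q * (A/q) * b * (G/G'))"
  using assms by (simp add: field_simps)

lemma absML_summable:
  fixes \<alpha> \<beta> \<gamma> y :: real assumes a: "\<alpha> > 0"
  shows "summable (\<lambda>k. (real k + 1) * (\<bar>pochhammer \<gamma> k\<bar> * \<bar>y\<bar>^k / (\<bar>Gamma (\<alpha> * real k + \<beta>)\<bar> * fact k)))"
    (is "summable ?f")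
proof -
  define \<epsilon> :: real where "\<epsilon> = 1 / (4 * (\<bar>\<gamma>\<bar> + 1) * (\<bar>y\<bar> + 1))"
  have \<epsilon>: "\<epsilon> > 0" by (simp add: \<epsilon>_def add_pos_pos)
  define M where "M = max 2 (1 + \<epsilon> powr (-1/\<alpha>))"
  obtain N :: nat where N: "(M - \<beta>) / \<alpha> \<le> real N" using real_arch_simple by blast
  show ?thesis
  proof (rule summable_ratio_test[where c="1/2" and N=N])
    fix n assume n: "N \<le> n"
    define z where "z = \<alpha> * real n + \<beta>"
    have "(M - \<beta>) / \<alpha> \<le> real n" using N n by linarith
    hence zM: "M \<le> z" using a by (simp add: z_def field_simps)
    hence z2: "z \<ge> 2" and z1: "z - 1 \<ge> \<epsilon> powr (-1/\<alpha>)" by (auto simp: M_def)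
    have gz: "Gamma z > 0" "Gamma (z + \<alpha>) > 0" by (rule Gamma_real_pos, use z2 a in simp)+
    have gS: "Gamma (\<alpha> * real (Suc n) + \<beta>) = Gamma (z + \<alpha>)" by (simp add: z_def algebra_simps)
    define R where "R = (real n + 2) / (real n + 1) * (\<bar>\<gamma> + real n\<bar> / (real n + 1)) * \<bar>y\<bar> * (Gamma z / Gamma (z + \<alpha>))"
    have eq: "?f (Suc n) = ?f n * R"
    proof -
      have "?f (Suc n) = ((real n + 1) + 1) * (\<bar>pochhammer \<gamma> n\<bar> * \<bar>\<gamma> + real n\<bar> * (\<bar>y\<bar> * \<bar>y\<bar>^n)
          / (Gamma (z + \<alpha>) * ((real n + 1) * fact n)))"
        unfolding gS pochhammer_Suc abs_mult power_Suc fact_Suc abs_of_pos[OF gz(2)] by simp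
      also have "\<dots> = (real n + 1) * (\<bar>pochhammer \<gamma> n\<bar> * \<bar>y\<bar>^n / (Gamma z * fact n)) *
          (((real n + 1) + 1) / (real n + 1) * (\<bar>\<gamma> + real n\<bar> / (real n + 1)) * \<bar>y\<bar> * (Gamma z / Gamma (z + \<alpha>)))"
        by (rule ratio_aux) (use gz in auto)
      also have "\<dots> = ?f n * R" unfolding R_def z_def abs_of_pos[OF gz(1)[unfolded z_def]]
        by (simp add: add.assoc)
      finally show ?thesis .
    qed
    have r1: "(real n + 2) / (real n + 1) \<le> 2" by (simp add: field_simps)
    have r2: "\<bar>\<gamma> + real n\<bar> / (real n + 1) \<le> \<bar>\<gamma>\<bar> + 1"
    proof -
      have "\<bar>\<gamma> + real n\<bar> \<le> (\<bar>\<gamma>\<bar> + 1) * (real n + 1)" by (simp add: algebra_simps abs_triangle_ineq[THEN order_trans])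
      thus ?thesis by (simp add: field_simps)
    qed
    have r3: "Gamma z / Gamma (z + \<alpha>) \<le> \<epsilon>"
    proof -
      have "Gamma z / Gamma (z + \<alpha>) \<le> (z - 1) powr (-\<alpha>)"
        by (rule Gamma_ratio_bound) (use a z2 in auto)
      also have "\<dots> \<le> (\<epsilon> powr (-1/\<alpha>)) powr (-\<alpha>)"
        by (rule powr_mono2') (use a \<epsilon> z1 in auto)
      also have "\<dots> = \<epsilon>" using a \<epsilon> by (simp add: powr_powr)
      finally show ?thesis .
    qed
    have "R \<le> 2 * (\<bar>\<gamma>\<bar> + 1) * (\<bar>y\<bar> + 1) * \<epsilon>"
      unfolding R_def
      by (intro mult_mono r1 r2 r3) (use gz in auto)
    also have "\<dots> = 1/2"
    proof -
      have "(\<bar>\<gamma>\<bar> + 1) * (\<bar>y\<bar> + 1) > 0" by (intro mult_pos_pos) auto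
      thus ?thesis unfolding \<epsilon>_def by (simp add: field_simps)
    qed
    finally have R: "R \<le> 1/2" .
    have f0: "?f n \<ge> 0" by simp
    have "norm (?f (Suc n)) = ?f n * R" using eq f0 R gz unfolding R_def by (simp add: abs_mult)
    also have "\<dots> \<le> ?f n * (1/2)" by (rule mult_left_mono[OF R f0])
    finally show "norm (?f (Suc n)) \<le> 1/2 * norm (?f n)" using f0 by simp
  qed simp
qed

lemma ML3_summable:
  fixes \<alpha> \<beta> \<gamma> x :: real assumes a: "\<alpha> > 0"
  shows "summable (\<lambda>k. pochhammer \<gamma> k * x ^ k / (Gamma (\<alpha> * real k + \<beta>) * fact k))"
proof (rule summable_comparison_test[OF _ absML_summable[OF a, of \<gamma> x \<beta>]])
  show "\<exists>N. \<forall>n\<ge>N. norm (pochhammer \<gamma> n * x ^ n / (Gamma (\<alpha> * real n + \<beta>) * fact n))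
      \<le> (real n + 1) * (\<bar>pochhammer \<gamma> n\<bar> * \<bar>x\<bar> ^ n / (\<bar>Gamma (\<alpha> * real n + \<beta>)\<bar> * fact n))"
  proof (intro exI allI impI)
    fix n :: nat
    have "0 \<le> \<bar>pochhammer \<gamma> n\<bar> * \<bar>x\<bar> ^ n / (\<bar>Gamma (\<alpha> * real n + \<beta>)\<bar> * fact n)" by simp
    hence "1 * (\<bar>pochhammer \<gamma> n\<bar> * \<bar>x\<bar> ^ n / (\<bar>Gamma (\<alpha> * real n + \<beta>)\<bar> * fact n))
       \<le> (real n + 1) * (\<bar>pochhammer \<gamma> n\<bar> * \<bar>x\<bar> ^ n / (\<bar>Gamma (\<alpha> * real n + \<beta>)\<bar> * fact n))"
      by (intro mult_right_mono) auto
    thus "norm (pochhammer \<gamma> n * x ^ n / (Gamma (\<alpha> * real n + \<beta>) * fact n))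
      \<le> (real n + 1) * (\<bar>pochhammer \<gamma> n\<bar> * \<bar>x\<bar> ^ n / (\<bar>Gamma (\<alpha> * real n + \<beta>)\<bar> * fact n))"
      by (simp add: abs_mult power_abs)
  qed
qed

lemma ML3_deriv0:
  fixes \<alpha> \<beta> \<gamma> :: real assumes a: "\<alpha> > 0"
  shows "(ML3 \<gamma> \<alpha> \<beta> has_real_derivative (\<gamma> / Gamma (\<alpha> + \<beta>))) (at 0)"
proof -
  define c where "c k = pochhammer \<gamma> k / (Gamma (\<alpha> * real k + \<beta>) * fact k)" for k
  have MLeq: "ML3 \<gamma> \<alpha> \<beta> = (\<lambda>x. \<Sum>n. c n * x ^ n)"
    by (rule ext) (simp add: ML3_def c_def)
  have sm: "summable (\<lambda>n. c n * y ^ n)" for y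
    using ML3_summable[OF a, of \<gamma> y \<beta>] by (simp add: c_def)
  have "((\<lambda>x. \<Sum>n. c n * x ^ n) has_field_derivative (\<Sum>n. diffs c n * 0 ^ n)) (at 0)"
    by (rule termdiffs_strong_converges_everywhere[OF sm])
  moreover have "(\<Sum>n. diffs c n * (0::real) ^ n) = diffs c 0"
    by (rule sums_unique[symmetric]) (rule sums_single[where i=0, THEN sums_cong[THEN iffD1, rotated]], simp)
  moreover have "diffs c 0 = \<gamma> / Gamma (\<alpha> + \<beta>)" by (simp add: diffs_def c_def)
  ultimately show ?thesis by (simp add: MLeq)
qed

lemma Beta_t:
  fixes a b t :: real assumes a: "a > 0" and b: "b > 0" and t: "t > 0"
  shows "((\<lambda>u. (t - u) powr (a - 1) * u powr (b - 1)) has_integral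
            (Gamma a * Gamma b / Gamma (a + b) * t powr (a + b - 1))) {0..t}"
proof -
  have B: "((\<lambda>s. s powr (b - 1) * (1 - s) powr (a - 1)) has_integral Beta b a) (cbox 0 1)"
    using has_integral_Beta_real[OF b a] by simp
  have "((\<lambda>x. (\<lambda>s. s powr (b - 1) * (1 - s) powr (a - 1)) ((1/t) *\<^sub>R x + 0)) has_integral
          (Beta b a /\<^sub>R (1/t) ^ DIM(real))) (cbox ((0 - 0) /\<^sub>R (1/t)) ((1 - 0) /\<^sub>R (1/t)))"
    by (rule has_integral_affinity'[OF B]) (use t in simp)
  hence "((\<lambda>u. (u / t) powr (b - 1) * (1 - u / t) powr (a - 1)) has_integral (t * Beta b a)) {0..t}"
    by simp
  hence "((\<lambda>u. (u / t) powr (b - 1) * (1 - u / t) powr (a - 1) * t powr (a + b - 2)) has_integral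
           (t * Beta b a * t powr (a + b - 2))) {0..t}"
    by (rule has_integral_mult_left)
  moreover have "(u / t) powr (b - 1) * (1 - u / t) powr (a - 1) * t powr (a + b - 2) =
      (t - u) powr (a - 1) * u powr (b - 1)" if "u \<in> {0..t}" for u
  proof -
    have "1 - u / t = (t - u) / t" using t by (simp add: field_simps)
    moreover have "t powr (a + b - 2) = t powr (b - 1) * t powr (a - 1)"
      by (simp add: powr_add[symmetric] add.commute)
    ultimately show ?thesis using t by (simp add: powr_divide field_simps)
  qed
  moreover have "t * Beta b a * t powr (a + b - 2) = Gamma a * Gamma b / Gamma (a + b) * t powr (a + b - 1)"
  proof -
    have "t powr (a + b - 1) = t powr (1 + (a + b - 2))" by (simp add: algebra_simps)
    also have "\<dots> = t * t powr (a + b - 2)" using powr_add[of t 1 "a + b - 2"] t by simp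
    finally have "t * t powr (a + b - 2) = t powr (a + b - 1)" by simp
    thus ?thesis by (simp add: Beta_def algebra_simps)
  qed
  ultimately show ?thesis using has_integral_cong by (metis (no_types, lifting))
qed

lemma phi_aux:
  fixes F P s Y G :: real assumes "F \<noteq> 0"
  shows "P * (F * (s * Y) / (G * F)) = s * (P * Y) / G"
  using assms by (simp add: field_simps)

lemma phi_sums:
  fixes \<alpha> u :: real assumes a: "\<alpha> > 0" and u: "u \<ge> 0"
  shows "(\<lambda>k. (-1)^k * u powr (\<alpha> * (real k + 1) - 1) / Gamma (\<alpha> * (real k + 1))) sums phi_ML \<alpha> u"
proof (cases "u = 0")
  case True
  have "(\<lambda>k. (-1)^k * u powr (\<alpha> * (real k + 1) - 1) / Gamma (\<alpha> * (real k + 1))) = (\<lambda>k. 0)"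
    using True by simp
  moreover have "phi_ML \<alpha> u = 0" using True unfolding phi_ML_def by simp
  ultimately show ?thesis by simp
next
  case False
  hence u0: "u > 0" using u by simp
  have "(\<lambda>k. pochhammer 1 k * (- (u powr \<alpha>)) ^ k / (Gamma (\<alpha> * real k + \<alpha>) * fact k)) sums ML2 \<alpha> \<alpha> (- (u powr \<alpha>))"
    unfolding ML2_def ML3_def by (rule summable_sums[OF ML3_summable[OF a]])
  hence "(\<lambda>k. u powr (\<alpha> - 1) * (pochhammer 1 k * (- (u powr \<alpha>)) ^ k / (Gamma (\<alpha> * real k + \<alpha>) * fact k)))
      sums (u powr (\<alpha> - 1) * ML2 \<alpha> \<alpha> (- (u powr \<alpha>)))"
    by (rule sums_mult)
  moreover have "u powr (\<alpha> - 1) * (pochhammer 1 k * (- (u powr \<alpha>)) ^ k / (Gamma (\<alpha> * real k + \<alpha>) * fact k))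
      = (-1)^k * u powr (\<alpha> * (real k + 1) - 1) / Gamma (\<alpha> * (real k + 1))" for k
  proof -
    have "(- (u powr \<alpha>)) ^ k = (-1)^k * u powr (real k * \<alpha>)"
      using u0 by (subst power_minus) (simp add: powr_power)
    moreover have "u powr (\<alpha> - 1) * u powr (real k * \<alpha>) = u powr (\<alpha> * (real k + 1) - 1)"
    proof -
      have "u powr (\<alpha> - 1) * u powr (real k * \<alpha>) = u powr ((\<alpha> - 1) + real k * \<alpha>)" by (simp add: powr_add)
      also have "(\<alpha> - 1) + real k * \<alpha> = \<alpha> * (real k + 1) - 1" by (simp add: algebra_simps)
      finally show ?thesis .
    qed
    moreover have "Gamma (\<alpha> * real k + \<alpha>) = Gamma (\<alpha> * (real k + 1))" by (simp add: algebra_simps)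
    moreover have "pochhammer 1 k = (fact k :: real)" by (simp add: pochhammer_fact)
    ultimately show ?thesis using phi_aux[of "fact k :: real" "u powr (\<alpha> - 1)" "(-1)^k" "u powr (real k * \<alpha>)", OF fact_nonzero]
      by (simp only:)
  qed
  ultimately show ?thesis by (simp add: phi_ML_def)
qed

lemma phi_int:
  fixes \<alpha> \<beta> t :: real assumes a: "\<alpha> > 0" and b: "\<beta> > 0" and t: "t > 0"
  shows "\<exists>S. ((\<lambda>u. (t - u) powr (\<beta> - 1) * phi_ML \<alpha> u) has_integral S) {0..t} \<and>
    (\<lambda>k. (-1)^k * Gamma \<beta> * t powr (\<beta> + \<alpha> * (real k + 1) - 1) / Gamma (\<beta> + \<alpha> * (real k + 1))) sums S"
proof -
  define s where "s k u = (-1)^k * u powr (\<alpha> * (real k + 1) - 1) / Gamma (\<alpha> * (real k + 1))" for k u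
  define J where "J k = (-1)^k * Gamma \<beta> * t powr (\<beta> + \<alpha> * (real k + 1) - 1) / Gamma (\<beta> + \<alpha> * (real k + 1))" for k
  define f where "f n u = (t - u) powr (\<beta> - 1) * (\<Sum>k<n. s k u)" for n u
  define g where "g u = (t - u) powr (\<beta> - 1) * phi_ML \<alpha> u" for u
  define d where "d k = (t powr \<alpha>) ^ k / Gamma (\<alpha> * real k + \<alpha>)" for k
  have dsum: "summable d"
    using ML3_summable[OF a, of 1 "t powr \<alpha>" \<alpha>] unfolding d_def by (simp add: pochhammer_fact[symmetric])
  define C where "C = suminf d"
  have d0: "d k \<ge> 0" for k
  proof -
    have "Gamma (\<alpha> * real k + \<alpha>) > 0" by (rule Gamma_real_pos) (use a in \<open>simp add: add_nonneg_pos\<close>)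
    thus ?thesis by (simp add: d_def)
  qed
  define h where "h u = C * ((t - u) powr (\<beta> - 1) * u powr (\<alpha> - 1))" for u
  have Gk: "Gamma (\<alpha> * (real k + 1)) > 0" for k by (rule Gamma_real_pos) (use a in simp)
  have fint: "(f n has_integral (\<Sum>k<n. J k)) {0..t}" for n
  proof -
    have "((\<lambda>u. \<Sum>k<n. (t - u) powr (\<beta> - 1) * s k u) has_integral (\<Sum>k<n. J k)) {0..t}"
    proof (rule has_integral_sum)
      fix k assume "k \<in> {..<n}"
      have "((\<lambda>u. ((-1)^k / Gamma (\<alpha> * (real k + 1))) * ((t - u) powr (\<beta> - 1) * u powr (\<alpha> * (real k + 1) - 1)))
          has_integral (((-1)^k / Gamma (\<alpha> * (real k + 1))) * (Gamma \<beta> * Gamma (\<alpha> * (real k + 1)) / Gamma (\<beta> + \<alpha> * (real k + 1)) * t powr (\<beta> + \<alpha> * (real k + 1) - 1)))) {0..t}"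
        by (rule has_integral_mult_right, rule Beta_t) (use a b t in auto)
      moreover have "((-1)^k / Gamma (\<alpha> * (real k + 1))) * (Gamma \<beta> * Gamma (\<alpha> * (real k + 1)) / Gamma (\<beta> + \<alpha> * (real k + 1)) * t powr (\<beta> + \<alpha> * (real k + 1) - 1)) = J k"
        using Gk[of k] by (simp add: J_def field_simps)
      ultimately show "((\<lambda>u. (t - u) powr (\<beta> - 1) * s k u) has_integral J k) {0..t}"
        by (simp add: s_def field_simps)
    qed auto
    moreover have "f n = (\<lambda>u. \<Sum>k<n. (t - u) powr (\<beta> - 1) * s k u)"
      by (rule ext) (simp add: f_def sum_distrib_left)
    ultimately show ?thesis by simp
  qed
  have hint: "h integrable_on {0..t}"
    unfolding h_def by (rule has_integral_integrable, rule has_integral_mult_right, rule Beta_t) (use a b t in auto)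
  have bound: "norm (f n u) \<le> h u" if u: "u \<in> {0..t}" for n u
  proof -
    have pw: "u powr (\<alpha> * (real k + 1) - 1) \<le> u powr (\<alpha> - 1) * (t powr \<alpha>) ^ k" for k
    proof (cases "u = 0")
      case True thus ?thesis by simp
    next
      case False
      hence u0: "u > 0" using u by simp
      have "u powr (\<alpha> * (real k + 1) - 1) = u powr ((\<alpha> - 1) + real k * \<alpha>)" by (simp add: algebra_simps)
      also have "\<dots> = u powr (\<alpha> - 1) * (u powr \<alpha>) ^ k"
        using u0 by (simp add: powr_power powr_add)
      also have "\<dots> \<le> u powr (\<alpha> - 1) * (t powr \<alpha>) ^ k"
        by (intro mult_left_mono power_mono powr_mono2) (use u a in auto)
      finally show ?thesis .
    qed
    have "\<bar>\<Sum>k<n. s k u\<bar> \<le> (\<Sum>k<n. \<bar>s k u\<bar>)" by (rule sum_abs)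
    also have "\<dots> \<le> (\<Sum>k<n. u powr (\<alpha> - 1) * d k)"
    proof (rule sum_mono)
      fix k
      have "\<bar>s k u\<bar> = u powr (\<alpha> * (real k + 1) - 1) / Gamma (\<alpha> * (real k + 1))"
        using Gk[of k] by (simp add: s_def abs_mult)
      also have "\<dots> \<le> u powr (\<alpha> - 1) * (t powr \<alpha>) ^ k / Gamma (\<alpha> * (real k + 1))"
        by (rule divide_right_mono[OF pw]) (use Gk[of k] in simp)
      also have "\<dots> = u powr (\<alpha> - 1) * d k" by (simp add: d_def algebra_simps)
      finally show "\<bar>s k u\<bar> \<le> u powr (\<alpha> - 1) * d k" .
    qed
    also have "\<dots> = u powr (\<alpha> - 1) * (\<Sum>k<n. d k)" by (simp add: sum_distrib_left)
    also have "\<dots> \<le> u powr (\<alpha> - 1) * C"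
      unfolding C_def by (intro mult_left_mono sum_le_suminf dsum) (use d0 in auto)
    finally have "\<bar>\<Sum>k<n. s k u\<bar> \<le> u powr (\<alpha> - 1) * C" .
    hence "(t - u) powr (\<beta> - 1) * \<bar>\<Sum>k<n. s k u\<bar> \<le> (t - u) powr (\<beta> - 1) * (u powr (\<alpha> - 1) * C)"
      by (rule mult_left_mono) simp
    thus ?thesis by (simp add: f_def h_def abs_mult algebra_simps)
  qed
  have conv: "(\<lambda>n. f n u) \<longlonglongrightarrow> g u" if u: "u \<in> {0..t}" for u
  proof -
    have "s' sums phi_ML \<alpha> u" if "s' = (\<lambda>k. s k u)" for s'
      using phi_sums[OF a, of u] u that by (simp add: s_def)
    hence "(\<lambda>n. \<Sum>k<n. s k u) \<longlonglongrightarrow> phi_ML \<alpha> u" by (simp add: sums_def)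
    thus ?thesis unfolding f_def g_def by (rule tendsto_mult_left)
  qed
  have fi: "f n integrable_on {0..t}" for n using fint[of n] by blast
  have gi: "g integrable_on {0..t}" and lim: "(\<lambda>n. integral {0..t} (f n)) \<longlonglongrightarrow> integral {0..t} g"
    using dominated_convergence[OF fi hint bound conv] by auto
  have "(\<lambda>n. \<Sum>k<n. J k) \<longlonglongrightarrow> integral {0..t} g"
  proof -
    have "integral {0..t} (f n) = (\<Sum>k<n. J k)" for n using fint[of n] by (rule integral_unique)
    thus ?thesis using lim by simp
  qed
  hence "J sums integral {0..t} g" by (simp add: sums_def)
  moreover have "(g has_integral integral {0..t} g) {0..t}" using gi by (rule integrable_integral)
  ultimately show ?thesis unfolding g_def J_def by blast
qed



lemma aux2:
  fixes n Pn Fn T Q M G Fk FN s T' C :: real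
  assumes "Fn \<noteq> 0" "Fk \<noteq> 0" "FN \<noteq> 0" "T * M = s * T'" "C = FN / (Fn * Fk)" "PN = Pn * Q"
  shows "n * (Pn / Fn * T) * (Q * M / (G * Fk)) = n * C * s * (PN / FN) * (T' / G)"
proof (cases "G = 0")
  case True thus ?thesis by simp
next
  case False
  have "n * (Pn / Fn * T) * (Q * M / (G * Fk)) = n * Pn * Q * (T * M) / (Fn * Fk * G)"
    using assms False by (simp add: field_simps)
  also have "\<dots> = n * Pn * Q * (s * T') / (Fn * Fk * G)" using assms(4) by simp
  also have "\<dots> = n * C * s * (PN / FN) * (T' / G)"
    unfolding assms(5,6) using assms False by (simp add: field_simps)
  finally show ?thesis .
qed

lemma altsum:
  fixes N :: nat
  shows "(\<Sum>n\<le>N. real n * real (N choose n) * (-1)^(N - n)) = (if N = 1 then 1 else 0)"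
proof (cases "N = 1")
  case True thus ?thesis by simp
next
  case False
  have "(\<Sum>n\<le>N. real n * real (N choose n) * (-1)^(N - n)) = (-1)^N * (\<Sum>n\<le>N. (-1)^n * real n * real (N choose n))"
    unfolding sum_distrib_left
  proof (rule sum.cong)
    fix n assume "n \<in> {..N}"
    hence nN: "n \<le> N" by simp
    have "((-1::real)^N) = (-1)^(N - n) * (-1)^n" using nN by (simp add: power_add[symmetric])
    hence "(-1::real)^N * (-1)^n = (-1)^(N-n) * ((-1)^n * (-1)^n)" by (simp add: mult.assoc)
    also have "(-1::real)^n * (-1)^n = 1" by (simp add: power_add[symmetric] flip: power_mult)
    finally show "real n * real (N choose n) * (-1)^(N - n) = (-1)^N * ((-1)^n * real n * real (N choose n))"
      by (simp add: algebra_simps)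
  qed simp
  also have "(\<Sum>n\<le>N. (-1)^n * real n * real (N choose n)) = 0"
    using choose_alternating_linear_sum[OF False] by simp
  finally show ?thesis using False by simp
qed

lemma gform:
  fixes \<alpha> t :: real and l n k :: nat assumes t: "t > 0"
  shows "(real n * (pochhammer (real l) n / fact n * t powr ((real n + real l) * \<alpha> - 1))) *
    (pochhammer (real n + real l) k * (- (t powr \<alpha>)) ^ k / (Gamma (\<alpha> * real k + (real n + real l) * \<alpha>) * fact k))
   = real n * real ((n+k) choose n) * (-1)^k * (pochhammer (real l) (n+k) / fact (n+k)) *
     (t powr ((real (n+k) + real l) * \<alpha> - 1) / Gamma ((real (n+k) + real l) * \<alpha>))"
proof -
  have G: "Gamma (\<alpha> * real k + (real n + real l) * \<alpha>) = Gamma ((real (n+k) + real l) * \<alpha>)"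
    by (simp add: algebra_simps)
  have TM: "t powr ((real n + real l) * \<alpha> - 1) * (- (t powr \<alpha>)) ^ k = (-1)^k * t powr ((real (n+k) + real l) * \<alpha> - 1)"
  proof -
    have "(- (t powr \<alpha>)) ^ k = (-1)^k * (t powr \<alpha>) ^ k" by (rule power_minus)
    also have "(t powr \<alpha>) ^ k = t powr (real k * \<alpha>)" using t by (simp add: powr_power)
    finally have 1: "(- (t powr \<alpha>)) ^ k = (-1)^k * t powr (real k * \<alpha>)" .
    have "t powr ((real n + real l) * \<alpha> - 1) * t powr (real k * \<alpha>) = t powr (((real n + real l) * \<alpha> - 1) + real k * \<alpha>)"
      by (simp add: powr_add)
    also have "((real n + real l) * \<alpha> - 1) + real k * \<alpha> = (real (n+k) + real l) * \<alpha> - 1"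
      by (simp add: algebra_simps)
    finally show ?thesis unfolding 1 by (simp add: algebra_simps)
  qed
  have C: "real ((n+k) choose n) = fact (n+k) / (fact n * fact k)"
    using binomial_fact[of n "n+k", where 'a=real] by simp
  have PN: "pochhammer (real l) (n+k) = pochhammer (real l) n * pochhammer (real n + real l) k"
    using pochhammer_product'[of "real l" n k] by (simp add: add.commute)
  show ?thesis unfolding G[symmetric]
    by (rule aux2[OF fact_nonzero fact_nonzero fact_nonzero TM C PN])
qed

lemma mP_sums:
  fixes \<alpha> t :: real and l :: nat assumes a: "\<alpha> > 0" and t: "t > 0" and l: "l \<ge> 1"
  shows "(\<lambda>n. real n * P_nal n \<alpha> l t) sums (real l * t powr (real l * \<alpha> + \<alpha> - 1) / Gamma ((real l + 1) * \<alpha>))"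
proof -
  define x where "x = t powr \<alpha>"
  have x0: "x > 0" using t by (simp add: x_def)
  define E where "E N = t powr ((real N + real l) * \<alpha> - 1) / Gamma ((real N + real l) * \<alpha>)" for N :: nat
  define g where "g n k = (real n * (pochhammer (real l) n / fact n * t powr ((real n + real l) * \<alpha> - 1))) *
    (pochhammer (real n + real l) k * (- x) ^ k / (Gamma (\<alpha> * real k + (real n + real l) * \<alpha>) * fact k))" for n k :: nat
  have gf: "g n k = real n * real ((n+k) choose n) * (-1)^k * (pochhammer (real l) (n+k) / fact (n+k)) * E (n+k)" for n k
    unfolding g_def E_def x_def by (rule gform[OF t])
  have inner: "(\<lambda>k. g n k) sums (real n * P_nal n \<alpha> l t)" for n
  proof -
    have "(\<lambda>k. pochhammer (real n + real l) k * (- x) ^ k / (Gamma (\<alpha> * real k + (real n + real l) * \<alpha>) * fact k))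
        sums ML3 (real n + real l) \<alpha> ((real n + real l) * \<alpha>) (- x)"
      unfolding ML3_def by (rule summable_sums[OF ML3_summable[OF a]])
    from sums_mult[OF this, of "real n * (pochhammer (real l) n / fact n * t powr ((real n + real l) * \<alpha> - 1))"]
    show ?thesis unfolding g_def P_nal_def x_def by (simp only: mult.assoc)
  qed
  have Epos: "E N \<ge> 0" for N
  proof -
    have "Gamma ((real N + real l) * \<alpha>) > 0" by (rule Gamma_real_pos) (use a l in simp)
    thus ?thesis by (simp add: E_def)
  qed
  have pp: "pochhammer (real l) N \<ge> 0" for N by (rule pochhammer_nonneg) (use l in simp)
  define c where "c N = pochhammer (real l) N / fact N * E N" for N
  have c0: "c N \<ge> 0" for N using pp Epos by (simp add: c_def)
  define bt where "bt = (\<lambda>(N::nat, n::nat). (n, N - n))"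
  define SS where "SS = Sigma (UNIV::nat set) (\<lambda>N. {..N})"
  have bij: "bij_betw bt SS (UNIV \<times> UNIV)"
    by (rule bij_betw_byWitness[where f'="\<lambda>(n,k). (n+k, n)"]) (auto simp: bt_def SS_def)
  define G where "G = (\<lambda>(n,k). g n k)"
  have Gbt: "G (bt (N, n)) = real n * real (N choose n) * (-1)^(N-n) * c N" if "n \<le> N" for N n
    using that by (simp add: G_def bt_def gf c_def)
  define A where "A N = (\<Sum>n\<le>N. norm (G (bt (N, n))))" for N
  have A0: "A N \<ge> 0" for N by (simp add: A_def sum_nonneg)
  have Aeq: "A N = (\<Sum>n\<le>N. real n * real (N choose n)) * c N" for N
    unfolding A_def sum_distrib_right
    by (rule sum.cong) (use c0 in \<open>auto simp: Gbt abs_mult\<close>)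
  have EN: "E N = t powr (real l * \<alpha> - 1) * x ^ N / Gamma (\<alpha> * real N + real l * \<alpha>)" for N
  proof -
    have "t powr ((real N + real l) * \<alpha> - 1) = t powr ((real l * \<alpha> - 1) + real N * \<alpha>)"
      by (simp add: algebra_simps)
    also have "\<dots> = t powr (real l * \<alpha> - 1) * x ^ N"
      using t by (simp add: powr_add x_def powr_power)
    finally show ?thesis by (simp add: E_def algebra_simps)
  qed
  have Abound: "A N \<le> t powr (real l * \<alpha> - 1) * ((real N + 1) * (\<bar>pochhammer (real l) N\<bar> * \<bar>2 * x\<bar> ^ N /
       (\<bar>Gamma (\<alpha> * real N + real l * \<alpha>)\<bar> * fact N)))" for N
  proof -
    have "(\<Sum>n\<le>N. real n * real (N choose n)) \<le> (\<Sum>n\<le>N. (real N + 1) * real (N choose n))"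
      by (rule sum_mono) (auto intro!: mult_right_mono)
    also have "\<dots> = (real N + 1) * 2 ^ N"
      by (simp add: sum_distrib_left[symmetric] of_nat_sum[symmetric] choose_row_sum)
    finally have s: "(\<Sum>n\<le>N. real n * real (N choose n)) \<le> (real N + 1) * 2 ^ N" .
    have "A N \<le> (real N + 1) * 2 ^ N * c N" unfolding Aeq by (rule mult_right_mono[OF s c0])
    also have "\<dots> = t powr (real l * \<alpha> - 1) * ((real N + 1) * (\<bar>pochhammer (real l) N\<bar> * \<bar>2 * x\<bar> ^ N /
       (\<bar>Gamma (\<alpha> * real N + real l * \<alpha>)\<bar> * fact N)))"
    proof -
      have "Gamma (\<alpha> * real N + real l * \<alpha>) > 0" by (rule Gamma_real_pos) (use a l in \<open>simp add: add_nonneg_pos\<close>)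
      thus ?thesis using pp[of N] x0 unfolding c_def EN
        by (simp add: power_mult_distrib abs_mult field_simps)
    qed
    finally show ?thesis .
  qed
  have Asum: "summable A"
    by (rule summable_comparison_test[OF _ summable_mult[OF absML_summable[OF a]]])
       (use Abound A0 in auto)
  have Hsum: "(\<lambda>p. norm (G (bt p))) summable_on SS"
    unfolding SS_def
  proof (rule summable_on_SigmaI[where g=A])
    fix N :: nat assume "N \<in> UNIV"
    show "((\<lambda>n. norm (G (bt (N, n)))) has_sum A N) {..N}"
      by (rule has_sum_finiteI) (simp_all add: A_def)
  next
    show "A summable_on UNIV" by (rule summable_nonneg_imp_summable_on_strong[OF Asum]) (use A0 in auto)
  qed auto
  have Gabs: "(\<lambda>p. norm (G p)) summable_on (UNIV \<times> UNIV)"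
    using summable_on_reindex_bij_betw[OF bij, of "\<lambda>p. norm (G p)"] Hsum by simp
  define S where "S = real l * E 1"
  have D: "(\<Sum>n\<le>N. G (bt (N, n))) = (if N = 1 then S else 0)" for N
  proof -
    have "(\<Sum>n\<le>N. G (bt (N, n))) = (\<Sum>n\<le>N. real n * real (N choose n) * (-1)^(N-n)) * c N"
      unfolding sum_distrib_right by (rule sum.cong) (auto simp: Gbt)
    also have "\<dots> = (if N = 1 then c 1 else 0)" by (simp add: altsum)
    also have "c 1 = S" by (simp add: c_def S_def)
    finally show ?thesis .
  qed
  have Dhas: "((\<lambda>N. if N = 1 then S else 0) has_sum S) UNIV"
    by (rule has_sum_finite_neutralI[where B="{1}"]) auto
  have Hhas: "((\<lambda>p. G (bt p)) has_sum S) SS"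
    unfolding SS_def
  proof (rule has_sum_SigmaI[where g="\<lambda>N. if N = 1 then S else 0"])
    fix N :: nat assume "N \<in> UNIV"
    show "((\<lambda>n. G (bt (N, n))) has_sum (if N = 1 then S else 0)) {..N}"
      by (rule has_sum_finiteI) (simp_all add: D)
  next
    show "((\<lambda>N. if N = 1 then S else 0) has_sum S) UNIV" by (rule Dhas)
  next
    show "(\<lambda>p. G (bt p)) summable_on Sigma UNIV (\<lambda>N. {..N})"
      using abs_summable_summable[of "\<lambda>p. G (bt p)"] Hsum unfolding SS_def by simp
  qed
  have Ghas: "(G has_sum S) (UNIV \<times> UNIV)"
    using has_sum_reindex_bij_betw[OF bij, of G S] Hhas by simp
  have inner2: "((\<lambda>k. G (n, k)) has_sum (real n * P_nal n \<alpha> l t)) UNIV" for n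
  proof -
    have "(\<lambda>k. norm (G (n, k))) summable_on UNIV"
      using Gabs unfolding Infinite_Sum.abs_summable_on_Sigma_iff by auto
    hence "summable (\<lambda>k. norm (g n k))" using summable_on_imp_summable by (simp add: G_def)
    from norm_summable_imp_has_sum[OF this inner] show ?thesis by (simp add: G_def)
  qed
  have "((\<lambda>n. real n * P_nal n \<alpha> l t) has_sum S) UNIV"
    by (rule has_sum_Sigma'[OF Ghas inner2])
  hence "(\<lambda>n. real n * P_nal n \<alpha> l t) sums S" by (rule has_sum_imp_sums)
  moreover have "S = real l * t powr (real l * \<alpha> + \<alpha> - 1) / Gamma ((real l + 1) * \<alpha>)"
    by (simp add: S_def E_def algebra_simps)
  ultimately show ?thesis by simp
qed

lemma m_al_closed:
  fixes \<alpha> s :: real and l :: nat assumes a: "\<alpha> > 0" and s: "s \<ge> 0" and l: "l \<ge> 1"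
  shows "m_al \<alpha> l s = real l * s powr (real l * \<alpha> + \<alpha> - 1) / Gamma ((real l + 1) * \<alpha>)"
proof (cases "s = 0")
  case True
  thus ?thesis by (simp add: m_al_def P_nal_def)
next
  case False
  hence "s > 0" using s by simp
  from mP_sums[OF a this l] show ?thesis unfolding m_al_def by (rule sums_unique[symmetric])
qed

theorem mainTheorem11:
  fixes \<alpha> :: real and l :: nat
  assumes "0 < \<alpha>" and "\<alpha> < 1" and "l \<ge> 1"
  shows "\<forall>t>0.
      (\<lambda>n. real n * P_nal n \<alpha> l t) sums m_al \<alpha> l t
    \<and> ((\<lambda>k. t powr (\<alpha> * real l - 1) * ML3 (real l) \<alpha> (\<alpha> * real l) (- (1 - exp (- k)) * t powr \<alpha>))
         has_real_derivative (- m_al \<alpha> l t)) (at 0)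
    \<and> m_al \<alpha> l t = real l * t powr (real l * \<alpha> + \<alpha> - 1) / Gamma ((real l + 1) * \<alpha>)
    \<and> (\<lambda>u. (t - u) powr (\<alpha> * real l - 1) * phi_ML \<alpha> u) integrable_on {0..t}
    \<and> (\<lambda>u. m_al \<alpha> l (t - u) * phi_ML \<alpha> u) integrable_on {0..t}
    \<and> m_al \<alpha> l t = real l * RL_int (\<alpha> * real l) (phi_ML \<alpha>) t + lconv (m_al \<alpha> l) (phi_ML \<alpha>) t"
proof (intro allI impI)
  fix t :: real assume t: "t > 0"
  have a: "\<alpha> > 0" and l: "l \<ge> 1" using assms by auto
  define M where "M = real l * t powr (real l * \<alpha> + \<alpha> - 1) / Gamma ((real l + 1) * \<alpha>)"
  have mt: "m_al \<alpha> l t = M" unfolding M_def by (rule m_al_closed[OF a _ l]) (use t in simp)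
  have c1: "(\<lambda>n. real n * P_nal n \<alpha> l t) sums m_al \<alpha> l t"
    using mP_sums[OF a t l] mt by (simp add: M_def)
  have c2: "((\<lambda>k. t powr (\<alpha> * real l - 1) * ML3 (real l) \<alpha> (\<alpha> * real l) (- (1 - exp (- k)) * t powr \<alpha>))
         has_real_derivative (- m_al \<alpha> l t)) (at 0)"
  proof -
    have dg: "((\<lambda>k::real. - (1 - exp (- k)) * t powr \<alpha>) has_real_derivative (- (t powr \<alpha>))) (at 0)"
      by (auto intro!: derivative_eq_intros)
    have dE: "(ML3 (real l) \<alpha> (\<alpha> * real l) has_real_derivative (real l / Gamma (\<alpha> + \<alpha> * real l)))
        (at ((\<lambda>k::real. - (1 - exp (- k)) * t powr \<alpha>) 0))"
      using ML3_deriv0[OF a, of "real l" "\<alpha> * real l"] by simp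
    have "((\<lambda>k. ML3 (real l) \<alpha> (\<alpha> * real l) (- (1 - exp (- k)) * t powr \<alpha>)) has_real_derivative
        (real l / Gamma (\<alpha> + \<alpha> * real l) * (- (t powr \<alpha>)))) (at 0)"
      by (rule DERIV_chain2[OF dE dg])
    hence "((\<lambda>k. t powr (\<alpha> * real l - 1) * ML3 (real l) \<alpha> (\<alpha> * real l) (- (1 - exp (- k)) * t powr \<alpha>))
         has_real_derivative (t powr (\<alpha> * real l - 1) * (real l / Gamma (\<alpha> + \<alpha> * real l) * (- (t powr \<alpha>))))) (at 0)"
      by (rule DERIV_cmult)
    moreover have "t powr (\<alpha> * real l - 1) * (real l / Gamma (\<alpha> + \<alpha> * real l) * (- (t powr \<alpha>))) = - M"
    proof -
      have "t powr (\<alpha> * real l - 1) * t powr \<alpha> = t powr ((\<alpha> * real l - 1) + \<alpha>)" by (simp add: powr_add)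
      also have "(\<alpha> * real l - 1) + \<alpha> = real l * \<alpha> + \<alpha> - 1" by (simp add: algebra_simps)
      finally have 1: "t powr (\<alpha> * real l - 1) * t powr \<alpha> = t powr (real l * \<alpha> + \<alpha> - 1)" .
      have 2: "\<alpha> + \<alpha> * real l = (real l + 1) * \<alpha>" by (simp add: algebra_simps)
      show ?thesis unfolding M_def 2 using 1 by (simp add: algebra_simps)
    qed
    ultimately show ?thesis using mt by simp
  qed
  define \<beta>1 where "\<beta>1 = \<alpha> * real l"
  define \<beta>2 where "\<beta>2 = \<alpha> * (real l + 1)"
  have b1: "\<beta>1 > 0" using a l by (simp add: \<beta>1_def)
  have b2: "\<beta>2 > 0" using a by (simp add: \<beta>2_def add_pos_nonneg)
  obtain S1 where S1i: "((\<lambda>u. (t - u) powr (\<beta>1 - 1) * phi_ML \<alpha> u) has_integral S1) {0..t}"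
    and S1s: "(\<lambda>k. (-1)^k * Gamma \<beta>1 * t powr (\<beta>1 + \<alpha> * (real k + 1) - 1) / Gamma (\<beta>1 + \<alpha> * (real k + 1))) sums S1"
    using phi_int[OF a b1 t] by blast
  obtain S2 where S2i: "((\<lambda>u. (t - u) powr (\<beta>2 - 1) * phi_ML \<alpha> u) has_integral S2) {0..t}"
    and S2s: "(\<lambda>k. (-1)^k * Gamma \<beta>2 * t powr (\<beta>2 + \<alpha> * (real k + 1) - 1) / Gamma (\<beta>2 + \<alpha> * (real k + 1))) sums S2"
    using phi_int[OF a b2 t] by blast
  have c4: "(\<lambda>u. (t - u) powr (\<alpha> * real l - 1) * phi_ML \<alpha> u) integrable_on {0..t}"
    using S1i unfolding \<beta>1_def by blast
  define c where "c = real l / Gamma \<beta>2"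
  have meq: "m_al \<alpha> l (t - u) * phi_ML \<alpha> u = c * ((t - u) powr (\<beta>2 - 1) * phi_ML \<alpha> u)" if "u \<in> {0..t}" for u
  proof -
    have "m_al \<alpha> l (t - u) = real l * (t - u) powr (real l * \<alpha> + \<alpha> - 1) / Gamma ((real l + 1) * \<alpha>)"
      by (rule m_al_closed[OF a _ l]) (use that in simp)
    moreover have "real l * \<alpha> + \<alpha> - 1 = \<beta>2 - 1" "(real l + 1) * \<alpha> = \<beta>2" by (simp_all add: \<beta>2_def algebra_simps)
    ultimately show ?thesis by (simp add: c_def)
  qed
  have S2c: "((\<lambda>u. m_al \<alpha> l (t - u) * phi_ML \<alpha> u) has_integral (c * S2)) {0..t}"
    using has_integral_mult_right[OF S2i, of c] meq has_integral_cong by (metis (no_types, lifting))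
  have c5: "(\<lambda>u. m_al \<alpha> l (t - u) * phi_ML \<alpha> u) integrable_on {0..t}" using S2c by blast
  define aa where "aa k = t powr (\<beta>1 + \<alpha> * (real k + 1) - 1) / Gamma (\<beta>1 + \<alpha> * (real k + 1))" for k :: nat
  define f where "f k = (-1)^k * aa k" for k :: nat
  have G1: "Gamma \<beta>1 > 0" by (rule Gamma_real_pos[OF b1])
  have G2: "Gamma \<beta>2 > 0" by (rule Gamma_real_pos[OF b2])
  have RL: "RL_int (\<alpha> * real l) (phi_ML \<alpha>) t = S1 / Gamma \<beta>1"
    unfolding RL_int_def using S1i integral_unique unfolding \<beta>1_def by (metis mult_1 divide_inverse mult.commute inverse_eq_divide)
  have fs: "f sums (S1 / Gamma \<beta>1)"
  proof -
    have "(\<lambda>k. (-1)^k * Gamma \<beta>1 * t powr (\<beta>1 + \<alpha> * (real k + 1) - 1) / Gamma (\<beta>1 + \<alpha> * (real k + 1)) / Gamma \<beta>1) sums (S1 / Gamma \<beta>1)"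
      by (rule sums_divide[OF S1s])
    moreover have "(-1)^k * Gamma \<beta>1 * t powr (\<beta>1 + \<alpha> * (real k + 1) - 1) / Gamma (\<beta>1 + \<alpha> * (real k + 1)) / Gamma \<beta>1 = f k" for k
      using G1 by (simp add: f_def aa_def)
    ultimately show ?thesis by simp
  qed
  have LC: "lconv (m_al \<alpha> l) (phi_ML \<alpha>) t = c * S2" unfolding lconv_def using S2c by (rule integral_unique)
  have fs2: "(\<lambda>k. real l * f k + real l * (-1)^k * aa (Suc k)) sums (real l * (S1 / Gamma \<beta>1) + c * S2)"
  proof (rule sums_add)
    show "(\<lambda>k. real l * f k) sums (real l * (S1 / Gamma \<beta>1))" by (rule sums_mult[OF fs])
    have "(\<lambda>k. c * ((-1)^k * Gamma \<beta>2 * t powr (\<beta>2 + \<alpha> * (real k + 1) - 1) / Gamma (\<beta>2 + \<alpha> * (real k + 1)))) sums (c * S2)"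
      by (rule sums_mult[OF S2s])
    moreover have "c * ((-1)^k * Gamma \<beta>2 * t powr (\<beta>2 + \<alpha> * (real k + 1) - 1) / Gamma (\<beta>2 + \<alpha> * (real k + 1)))
        = real l * (-1)^k * aa (Suc k)" for k
    proof -
      have "\<beta>2 + \<alpha> * (real k + 1) = \<beta>1 + \<alpha> * (real (Suc k) + 1)" by (simp add: \<beta>1_def \<beta>2_def algebra_simps)
      thus ?thesis using G2 by (simp add: aa_def c_def)
    qed
    ultimately show "(\<lambda>k. real l * (-1)^k * aa (Suc k)) sums (c * S2)" by simp
  qed
  have "f \<longlonglongrightarrow> 0" using fs by (intro summable_LIMSEQ_zero) (auto simp: sums_iff)
  from telescope_sums'[OF this] have "(\<lambda>k. f k - f (Suc k)) sums (f 0)" by simp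
  hence "(\<lambda>k. real l * (f k - f (Suc k))) sums (real l * f 0)" by (rule sums_mult)
  moreover have "real l * (f k - f (Suc k)) = real l * f k + real l * (-1)^k * aa (Suc k)" for k
    by (simp add: f_def algebra_simps)
  ultimately have "(\<lambda>k. real l * f k + real l * (-1)^k * aa (Suc k)) sums (real l * f 0)" by simp
  hence eq: "real l * (S1 / Gamma \<beta>1) + c * S2 = real l * f 0" using fs2 sums_unique2 by blast
  have "real l * f 0 = M"
  proof -
    have "\<beta>1 + \<alpha> * (real 0 + 1) - 1 = real l * \<alpha> + \<alpha> - 1" "\<beta>1 + \<alpha> * (real 0 + 1) = (real l + 1) * \<alpha>"
      by (simp_all add: \<beta>1_def algebra_simps)
    thus ?thesis by (simp add: f_def aa_def M_def)
  qed
  hence c6: "m_al \<alpha> l t = real l * RL_int (\<alpha> * real l) (phi_ML \<alpha>) t + lconv (m_al \<alpha> l) (phi_ML \<alpha>) t"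
    using eq mt RL LC by simp
  show "(\<lambda>n. real n * P_nal n \<alpha> l t) sums m_al \<alpha> l t
    \<and> ((\<lambda>k. t powr (\<alpha> * real l - 1) * ML3 (real l) \<alpha> (\<alpha> * real l) (- (1 - exp (- k)) * t powr \<alpha>))
         has_real_derivative (- m_al \<alpha> l t)) (at 0)
    \<and> m_al \<alpha> l t = real l * t powr (real l * \<alpha> + \<alpha> - 1) / Gamma ((real l + 1) * \<alpha>)
    \<and> (\<lambda>u. (t - u) powr (\<alpha> * real l - 1) * phi_ML \<alpha> u) integrable_on {0..t}
    \<and> (\<lambda>u. m_al \<alpha> l (t - u) * phi_ML \<alpha> u) integrable_on {0..t}
    \<and> m_al \<alpha> l t = real l * RL_int (\<alpha> * real l) (phi_ML \<alpha>) t + lconv (m_al \<alpha> l) (phi_ML \<alpha>) t"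
    using c1 c2 mt c4 c5 c6 by (simp add: M_def)
qed

end
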